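(* Let $d\ge3$, $d'=2$ and $\varepsilon,\varepsilon',p>0$. Then there exists a positive harmonic function $h$ on $E=\mathbb{R}^d_\varepsilon\cup\mathbb{R}^2_{\varepsilon'}\cup\{a^*\}$ (harmonic with respect to Brownian motion with varying dimension) such that $h\asymp1$ on $\mathbb{R}^d_\varepsilon$ (i.e. $c\le h\le C$ there for constants $c,C>0$) and $h(x)\asymp1+\log|x|_\rho$ for all $x\in\mathbb{R}^2_{\varepsilon'}$ with $|x|_\rho$ sufficiently large (i.e. there are $R_0,c,C>0$ with $c(1+\log|x|_\rho)\le h(x)\le C(1+\log|x|_\rho)$ for $x\in\mathbb{R}^2_{\varepsilon'}$, $|x|_\rho\ge R_0$).
   Context: $\mathbb{R}^k_r=\{x\in\mathbb{R}^k:|x|>r\}$. $E$ is obtained by placing $\mathbb{R}^d$ and $\mathbb{R}^2$ along complementary coordinates and identifying $\{|x|\le\varepsilon\}\subset\mathbb{R}^d$ and $\{|x|\le\varepsilon'\}\subset\mathbb{R}^2$ with one point $a^*$. $m_p(A)=m^{(d)}(A\cap\mathbb{R}^d)+p\,m^{(2)}(A\cap\mathbb{R}^2)$. Brownian motion with varying dimension is the (unique in law) $m_p$-symmetric diffusion on $E$ whose part processes on $\mathbb{R}^d_\varepsilon$ and $\mathbb{R}^2_{\varepsilon'}$ are Brownian motions killed upon leaving these sets and with no killing at $a^*$; its Dirichlet form on $L^2(E;m_p)$ is $\mathcal{E}(f,g)=\frac12\int_{\mathbb{R}^d_\varepsilon}\nabla f\cdot\nabla g\,dm_p+\frac12\int_{\mathbb{R}^2_{\varepsilon'}}\nabla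 f\cdot\nabla g\,dm_p$ on functions whose restrictions lie in $H^1$ of each part and which are quasi-everywhere equal to their value at $a^*$ on both boundary spheres. "Harmonic" means annihilated by the generator of this process (harmonic on each part and satisfying the gluing condition at $a^*$). $|x|_\rho=|x|-\varepsilon'$ for $x\in\mathbb{R}^2_{\varepsilon'}$. *)

theory Defs
  imports "HOL-Analysis.Analysis"
begin

definition pd :: "('a::euclidean_space \<Rightarrow> real) \<Rightarrow> 'a \<Rightarrow> 'a \<Rightarrow> real" where
  "pd f i x = frechet_derivative f (at x) i"

definition C2_on :: "'a::euclidean_space set \<Rightarrow> ('a \<Rightarrow> real) \<Rightarrow> bool" where
  "C2_on S f \<longleftrightarrow> open S \<and>
     (\<forall>x\<in>S. f differentiable (at x) \<and> (\<forall>i\<in>Basis. (pd f i) differentiable (at x))) \<and>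
     (\<forall>i\<in>Basis. continuous_on S (pd f i)) \<and>
     (\<forall>i\<in>Basis. \<forall>j\<in>Basis. continuous_on S (pd (pd f i) j))"

definition laplacian :: "('a::euclidean_space \<Rightarrow> real) \<Rightarrow> 'a \<Rightarrow> real" where
  "laplacian f x = (\<Sum>i\<in>Basis. pd (pd f i) i x)"

definition harmonic_on :: "'a::euclidean_space set \<Rightarrow> ('a \<Rightarrow> real) \<Rightarrow> bool" where
  "harmonic_on S f \<longleftrightarrow> C2_on S f \<and> (\<forall>x\<in>S. laplacian f x = 0)"

definition grad_dot :: "('a::euclidean_space \<Rightarrow> real) \<Rightarrow> ('a \<Rightarrow> real) \<Rightarrow> 'a \<Rightarrow> real" where
  "grad_dot f g x = (\<Sum>i\<in>Basis. pd f i x * pd g i x)"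

text \<open>Test functions near a*: C^1 on the whole space, compactly supported, and constant on
  a closed ball of radius r (r is chosen larger than the radius of the removed ball).\<close>
definition test_fn :: "real \<Rightarrow> ('a::euclidean_space \<Rightarrow> real) \<Rightarrow> bool" where
  "test_fn r g \<longleftrightarrow>
     (\<forall>x. g differentiable (at x)) \<and> (\<forall>i\<in>Basis. continuous_on UNIV (pd g i)) \<and>
     (\<exists>R. \<forall>x. R \<le> norm x \<longrightarrow> g x = 0) \<and>
     (\<forall>x. norm x \<le> r \<longrightarrow> g x = g 0)"

text \<open>A function on E = R^d_eps \<union> R^2_eps' \<union> {a*} is represented by its restriction hD to
  R^d_eps, its restriction h2 to R^2_eps' and its value a at a*.
  Harmonic for BMVD: harmonic on each part, continuous at a* (boundary values equal a),
  and the gluing (zero total flux) condition at a*, expressed weakly through the Dirichlet form: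
  E(h,g) = 0 for all test functions g that are constant near a*.\<close>
definition bmvd_harmonic ::
  "real \<Rightarrow> real \<Rightarrow> real \<Rightarrow> (real^'d \<Rightarrow> real) \<Rightarrow> (real^2 \<Rightarrow> real) \<Rightarrow> real \<Rightarrow> bool" where
  "bmvd_harmonic \<epsilon> \<epsilon>' p hD h2 a \<longleftrightarrow>
     harmonic_on {x. \<epsilon> < norm x} hD \<and> harmonic_on {x. \<epsilon>' < norm x} h2 \<and>
     (\<forall>y. norm y = \<epsilon> \<longrightarrow> (hD \<longlongrightarrow> a) (at y within {x. \<epsilon> < norm x})) \<and>
     (\<forall>y. norm y = \<epsilon>' \<longrightarrow> (h2 \<longlongrightarrow> a) (at y within {x. \<epsilon>' < norm x})) \<and>
     (\<forall>gd g2 r r'. \<epsilon> < r \<longrightarrow> \<epsilon>' < r' \<longrightarrow> test_fn r gd \<longrightarrow> test_fn r' g2 \<longrightarrow> gd 0 = g2 0 \<longrightarrow>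
        integral {x. \<epsilon> < norm x} (grad_dot hD gd)
          + p * integral {x. \<epsilon>' < norm x} (grad_dot h2 g2) = 0)"

end

theory Submission
  imports Defs
begin


lemma box_out:
  fixes x :: "'a::euclidean_space"
  assumes "x \<notin> cbox (-(R *\<^sub>R One)) (R *\<^sub>R One)"
  shows "R < norm x"
proof -
  from assms obtain i where i: "i \<in> Basis" and "\<not> (-R \<le> x \<bullet> i \<and> x \<bullet> i \<le> R)"
    by (auto simp: mem_box)
  then have "R < \<bar>x \<bullet> i\<bar>" by auto
  also have "\<bar>x \<bullet> i\<bar> \<le> norm x" using i by (rule Basis_le_norm)
  finally show ?thesis .
qed

lemma cs_integrable:
  fixes f :: "'a::euclidean_space \<Rightarrow> real"
  assumes "continuous_on UNIV f" and "\<And>x. R \<le> norm x \<Longrightarrow> f x = 0"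
  shows "(f has_integral integral (cbox (-(R *\<^sub>R One)) (R *\<^sub>R One)) f) UNIV"
proof (rule has_integral_on_superset)
  show "(f has_integral integral (cbox (-(R *\<^sub>R One)) (R *\<^sub>R One)) f) (cbox (-(R *\<^sub>R One)) (R *\<^sub>R One))"
    by (rule integrable_integral, rule integrable_continuous, rule continuous_on_subset[OF assms(1)]) auto
  show "f x = 0" if "x \<notin> cbox (-(R *\<^sub>R One)) (R *\<^sub>R One)" for x
    using box_out[OF that] assms(2) by auto
qed auto

lemma translate_integral:
  fixes f :: "'a::euclidean_space \<Rightarrow> real"
  assumes "continuous_on UNIV f" and "\<And>x. R \<le> norm x \<Longrightarrow> f x = 0"
  shows "integral UNIV (\<lambda>x. f (x + c)) = integral UNIV f"
proof -
  let ?B = "cbox (-(R *\<^sub>R One)) (R *\<^sub>R One)"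
  have I: "(f has_integral integral ?B f) UNIV" by (rule cs_integrable[OF assms])
  have J: "(f has_integral integral ?B f) ?B"
    by (rule integrable_integral, rule integrable_continuous, rule continuous_on_subset[OF assms(1)]) auto
  have "((\<lambda>x. f (1 *\<^sub>R x + c)) has_integral (1 / (\<bar>1\<bar> ^ DIM('a))) *\<^sub>R integral ?B f)
          ((\<lambda>x. (1 / 1) *\<^sub>R x + -((1 / 1) *\<^sub>R c)) ` ?B)"
    by (rule has_integral_affinity[OF J]) auto
  then have K: "((\<lambda>x. f (x + c)) has_integral integral ?B f) ((\<lambda>x. x + -c) ` ?B)" by simp
  have "((\<lambda>x. f (x + c)) has_integral integral ?B f) UNIV"
  proof (rule has_integral_on_superset[OF K])
    show "f (x + c) = 0" if "x \<notin> (\<lambda>x. x + -c) ` ?B" for x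
    proof -
      have "x + c \<notin> ?B"
      proof
        assume "x + c \<in> ?B"
        then have "(x + c) + -c \<in> (\<lambda>x. x + -c) ` ?B" by blast
        then show False using that by simp
      qed
      then show ?thesis using box_out assms(2) by fastforce
    qed
  qed auto
  then show ?thesis using I by (simp add: integral_unique)
qed

lemma deriv_zero_outside:
  fixes F :: "'a::euclidean_space \<Rightarrow> real"
  assumes der: "(F has_derivative F') (at x)" and supp: "\<And>x. R \<le> norm x \<Longrightarrow> F x = 0"
    and x: "R < norm x"
  shows "F' v = 0"
proof -
  have "((\<lambda>_. 0::real) has_derivative (\<lambda>_. 0)) (at x)" by simp
  then have "(F has_derivative (\<lambda>_. 0)) (at x)"
  proof (rule has_derivative_transform_within_open[where s="{y. R < norm y}"])
    show "open {y::'a. R < norm y}" by (intro open_Collect_less continuous_intros)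
  qed (use x supp in auto)
  with der have "F' = (\<lambda>_. 0)" by (rule has_derivative_unique)
  then show ?thesis by simp
qed

lemma line_deriv:
  fixes F :: "'a::euclidean_space \<Rightarrow> real"
  assumes der: "\<And>x. (F has_derivative F' x) (at x)"
  shows "((\<lambda>u. F (x + u *\<^sub>R i)) has_real_derivative F' (x + u *\<^sub>R i) i) (at u)"
proof -
  have l: "((\<lambda>u. x + u *\<^sub>R i) has_derivative (\<lambda>h. h *\<^sub>R i)) (at u)"
    by (auto intro!: derivative_eq_intros)
  have "((\<lambda>u. F (x + u *\<^sub>R i)) has_derivative (\<lambda>h. F' (x + u *\<^sub>R i) (h *\<^sub>R i))) (at u)"
    by (rule has_derivative_compose[OF l der])
  moreover have "(\<lambda>h. F' (x + u *\<^sub>R i) (h *\<^sub>R i)) = (*) (F' (x + u *\<^sub>R i) i)"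
  proof
    fix h
    have "linear (F' (x + u *\<^sub>R i))" using der has_derivative_linear by blast
    then show "F' (x + u *\<^sub>R i) (h *\<^sub>R i) = F' (x + u *\<^sub>R i) i * h"
      by (simp add: linear_scale)
  qed
  ultimately show ?thesis by (simp add: has_field_derivative_def)
qed

lemma integral_partial_zero:
  fixes F :: "'a::euclidean_space \<Rightarrow> real" and i :: 'a
  assumes i: "i \<in> Basis"
    and der: "\<And>x. (F has_derivative F' x) (at x)"
    and cont: "continuous_on UNIV (\<lambda>x. F' x i)"
    and supp0: "\<And>x. R0 \<le> norm x \<Longrightarrow> F x = 0"
  shows "integral UNIV (\<lambda>x. F' x i) = 0"
proof -
  define R where "R = max R0 1"
  have R: "R > 0" unfolding R_def by auto
  have supp: "F x = 0" if "R \<le> norm x" for x using supp0 that unfolding R_def by auto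
  define G where "G x = F' x i" for x
  have Gz: "G x = 0" if "R < norm x" for x
    unfolding G_def by (rule deriv_zero_outside[OF der supp that])
  have contF: "continuous_on UNIV F"
    using der has_derivative_continuous continuous_at_imp_continuous_on by blast
  have contG: "continuous_on UNIV G" using cont unfolding G_def .
  define K where "K = cball (0::'a) (R+1)"
  have "uniformly_continuous_on K G"
    by (rule compact_uniformly_continuous[OF continuous_on_subset[OF contG]]) (auto simp: K_def)
  then have uc: "\<forall>e>0. \<exists>d>0. \<forall>x\<in>K. \<forall>y\<in>K. dist y x < d \<longrightarrow> dist (G y) (G x) < e"
    unfolding uniformly_continuous_on_def by blast
  let ?B = "cbox (-((R+1) *\<^sub>R One)) ((R+1) *\<^sub>R One) :: 'a set"
  have GI: "(G has_integral integral ?B G) UNIV"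
    by (rule cs_integrable[OF contG]) (use Gz in auto)
  have ni: "norm i = 1" using i by simp
  have bound: "\<bar>integral UNIV G\<bar> \<le> e * measure lborel ?B" if e: "e > 0" for e
  proof -
    obtain d where d: "d > 0" and dd: "\<And>x y. x \<in> K \<Longrightarrow> y \<in> K \<Longrightarrow> dist y x < d \<Longrightarrow> dist (G y) (G x) < e"
      using uc e by blast
    define t where "t = min (d/2) (1/2)"
    have t: "t > 0" "t < d" "t \<le> 1/2" using d unfolding t_def by auto
    have pw: "\<bar>F (x + t *\<^sub>R i) - F x - t * G x\<bar> \<le> t * e" for x
    proof (cases "norm x \<le> R + 1/2")
      case True
      have "\<forall>u. 0 \<le> u \<and> u \<le> t \<longrightarrow> ((\<lambda>u. F (x + u *\<^sub>R i)) has_real_derivative G (x + u *\<^sub>R i)) (at u)"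
        unfolding G_def using line_deriv[OF der] by blast
      then obtain z where z: "0 < z" "z < t" "F (x + t *\<^sub>R i) - F (x + 0 *\<^sub>R i) = (t - 0) * G (x + z *\<^sub>R i)"
        using MVT2[OF t(1), of "\<lambda>u. F (x + u *\<^sub>R i)" "\<lambda>u. G (x + u *\<^sub>R i)"] by auto
      have xK: "x \<in> K" using True unfolding K_def by auto
      have "norm (x + z *\<^sub>R i) \<le> norm x + z" using norm_triangle_ineq[of x "z *\<^sub>R i"] ni z by simp
      then have yK: "x + z *\<^sub>R i \<in> K" using True z t unfolding K_def by auto
      have "dist (x + z *\<^sub>R i) x < d" using z t ni by (simp add: dist_norm)
      then have "dist (G (x + z *\<^sub>R i)) (G x) < e" using dd[OF xK yK] by simp
      then have "\<bar>G (x + z *\<^sub>R i) - G x\<bar> \<le> e" by (simp add: dist_real_def)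
      then have "t * \<bar>G (x + z *\<^sub>R i) - G x\<bar> \<le> t * e" using t by (simp add: mult_left_mono)
      moreover have "F (x + t *\<^sub>R i) - F x - t * G x = t * (G (x + z *\<^sub>R i) - G x)"
        using z by (simp add: algebra_simps)
      ultimately show ?thesis using t by (simp add: abs_mult)
    next
      case False
      have "norm x - t \<le> norm (x + t *\<^sub>R i)"
        using norm_triangle_ineq2[of x "- (t *\<^sub>R i)"] ni t by simp
      then have "F (x + t *\<^sub>R i) = 0" using False t by (intro supp) auto
      moreover have "F x = 0" using False by (intro supp) auto
      moreover have "G x = 0" using False by (intro Gz) auto
      ultimately show ?thesis using t e by simp
    qed
    define D where "D x = (F (x + t *\<^sub>R i) - F x) / t" for x
    have Dz: "D x = 0" if "R + 1 \<le> norm x" for x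
    proof -
      have "norm x - t \<le> norm (x + t *\<^sub>R i)"
        using norm_triangle_ineq2[of x "- (t *\<^sub>R i)"] ni t by simp
      then show ?thesis unfolding D_def using that t supp by auto
    qed
    have "integral UNIV (\<lambda>x. F (x + t *\<^sub>R i)) = integral UNIV F"
      by (rule translate_integral[OF contF supp])
    have FI: "(F has_integral integral ?B F) UNIV"
      by (rule cs_integrable[OF contF]) (use supp in auto)
    have Ftc: "continuous_on UNIV (\<lambda>x. F (x + t *\<^sub>R i))"
      by (intro continuous_on_compose2[OF contF] continuous_intros) auto
    have Ftz: "F (x + t *\<^sub>R i) = 0" if "R + 1 \<le> norm x" for x
    proof -
      have "norm x - t \<le> norm (x + t *\<^sub>R i)"
        using norm_triangle_ineq2[of x "- (t *\<^sub>R i)"] ni t by simp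
      then show ?thesis using that t supp by auto
    qed
    have "(\<lambda>x. F (x + t *\<^sub>R i)) integrable_on UNIV"
      using cs_integrable[of "\<lambda>x. F (x + t *\<^sub>R i)" "R + 1", OF Ftc Ftz] by blast
    then have FtI: "((\<lambda>x. F (x + t *\<^sub>R i)) has_integral integral UNIV F) UNIV"
      using translate_integral[OF contF supp, where c = "t *\<^sub>R i"] integrable_integral by fastforce
    have FI': "(F has_integral integral UNIV F) UNIV"
      using FI integrable_integral by blast
    have "((\<lambda>x. (1/t) * (F (x + t *\<^sub>R i) - F x)) has_integral (1/t) * (integral UNIV F - integral UNIV F)) UNIV"
      by (intro has_integral_mult_right has_integral_diff FtI FI')
    then have DI: "(D has_integral 0) UNIV" unfolding D_def by simp
    have GDI: "((\<lambda>x. G x - D x) has_integral integral UNIV G) UNIV"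
      using has_integral_diff[OF GI DI] GI by (simp add: integral_unique)
    have eqB: "(\<lambda>x. if x \<in> ?B then G x - D x else 0) = (\<lambda>x. G x - D x)"
    proof
      fix x
      show "(if x \<in> ?B then G x - D x else 0) = G x - D x"
      proof (cases "x \<in> ?B")
        case False
        then have "R + 1 < norm x" by (rule box_out)
        then show ?thesis using Gz Dz by auto
      qed simp
    qed
    have HB: "((\<lambda>x. G x - D x) has_integral integral UNIV G) ?B"
    proof -
      have "((\<lambda>x. if x \<in> ?B then G x - D x else 0) has_integral integral UNIV G) UNIV"
        unfolding eqB by (rule GDI)
      then show ?thesis by (simp only: has_integral_restrict_UNIV)
    qed
    have nb: "norm (G x - D x) \<le> e" for x
      proof -
        have "G x - D x = - (F (x + t *\<^sub>R i) - F x - t * G x) / t" unfolding D_def using t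
          by (simp add: field_simps)
        then have "\<bar>G x - D x\<bar> = \<bar>F (x + t *\<^sub>R i) - F x - t * G x\<bar> / t" using t by simp
        also have "\<dots> \<le> (t * e) / t" using pw t by (intro divide_right_mono) auto
        also have "\<dots> = e" using t(1) by simp
        finally show ?thesis by simp
      qed
    have "norm (integral UNIV G) \<le> e * measure lborel ?B"
      by (rule has_integral_bound[OF _ HB nb]) (use e in simp)
    then show ?thesis by simp
  qed
  have m: "measure lborel ?B \<ge> 0" by simp
  have "\<bar>integral UNIV G\<bar> \<le> 0 + e" if e: "e > 0" for e
  proof -
    have "\<bar>integral UNIV G\<bar> \<le> (e / (measure lborel ?B + 1)) * measure lborel ?B"
      using bound[of "e / (measure lborel ?B + 1)"] e m by simp
    also have "\<dots> = e * (measure lborel ?B / (measure lborel ?B + 1))" by simp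
    also have "\<dots> \<le> e * 1"
    proof (intro mult_left_mono)
      have "\<And>m::real. 0 \<le> m \<Longrightarrow> m/(m+1) \<le> 1" by simp
      then show "measure lborel ?B / (measure lborel ?B + 1) \<le> 1" using m by blast
    qed (use e in auto)
    finally show ?thesis by simp
  qed
  then have "\<bar>integral UNIV G\<bar> \<le> 0" by (rule field_le_epsilon)
  then show ?thesis unfolding G_def by simp
qed



lemma comp_inner:
  fixes x :: "'a::euclidean_space"
  assumes "(g has_real_derivative g') (at (x \<bullet> x))"
  shows "((\<lambda>y. g (y \<bullet> y)) has_derivative (\<lambda>h. g' * (2 * (x \<bullet> h)))) (at x)"
proof -
  have a: "((\<lambda>y. y \<bullet> y) has_derivative (\<lambda>h. h \<bullet> x + x \<bullet> h)) (at x)"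
    by (auto intro!: derivative_eq_intros)
  have b: "(g has_derivative (\<lambda>u. u * g')) (at (x \<bullet> x))"
  proof -
    have "(\<lambda>u. u * g') = (*) g'" by (rule ext) (simp add: mult.commute)
    then show ?thesis using assms by (simp add: has_field_derivative_def)
  qed
  have "((\<lambda>y. g (y \<bullet> y)) has_derivative (\<lambda>h. (h \<bullet> x + x \<bullet> h) * g')) (at x)"
    by (rule has_derivative_compose[OF a b])
  then show ?thesis by (simp add: inner_commute algebra_simps)
qed

lemma norm_gt_iff:
  fixes x :: "'a::euclidean_space"
  assumes "e \<ge> 0"
  shows "e < norm x \<longleftrightarrow> e\<^sup>2 < x \<bullet> x"
proof -
  have "x \<bullet> x = (norm x)\<^sup>2" by (simp add: dot_square_norm)
  moreover have "e < norm x \<longleftrightarrow> e\<^sup>2 < (norm x)\<^sup>2"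
  proof
    assume "e < norm x" then show "e\<^sup>2 < (norm x)\<^sup>2" using assms by (intro power_strict_mono) auto
  next
    assume "e\<^sup>2 < (norm x)\<^sup>2" then show "e < norm x" using power_less_imp_less_base[of e 2 "norm x"] by simp
  qed
  ultimately show ?thesis by simp
qed

lemma radial_harmonic:
  fixes \<phi> \<phi>1 \<phi>2 :: "real \<Rightarrow> real" and e :: real
  assumes e: "e \<ge> 0"
    and d1: "\<And>s. s > e\<^sup>2 \<Longrightarrow> (\<phi> has_real_derivative \<phi>1 s) (at s)"
    and d2: "\<And>s. s > e\<^sup>2 \<Longrightarrow> (\<phi>1 has_real_derivative \<phi>2 s) (at s)"
    and c2: "continuous_on {e\<^sup>2<..} \<phi>2"
    and lap: "\<And>s. s > e\<^sup>2 \<Longrightarrow> 4 * s * \<phi>2 s + 2 * DIM('a) * \<phi>1 s = 0"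
  shows "harmonic_on {x::'a::euclidean_space. e < norm x} (\<lambda>x. \<phi> (x \<bullet> x))"
    and "\<And>x i. e < norm (x::'a) \<Longrightarrow> pd (\<lambda>x. \<phi> (x \<bullet> x)) i x = 2 * \<phi>1 (x \<bullet> x) * (x \<bullet> i)"
proof -
  let ?S = "{x::'a. e < norm x}"
  let ?f = "\<lambda>x::'a. \<phi> (x \<bullet> x)"
  have opS: "open ?S" by (intro open_Collect_less continuous_intros)
  have inS: "e\<^sup>2 < x \<bullet> x" if "x \<in> ?S" for x using that norm_gt_iff[OF e] by auto
  have Df: "(?f has_derivative (\<lambda>h. 2 * \<phi>1 (x \<bullet> x) * (x \<bullet> h))) (at x)" if "x \<in> ?S" for x
    using comp_inner[OF d1[OF inS[OF that]]] by (simp add: algebra_simps)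
  have pdf: "pd ?f i x = 2 * \<phi>1 (x \<bullet> x) * (x \<bullet> i)" if "x \<in> ?S" for x i
    unfolding pd_def by (simp only: frechet_derivative_at[OF Df[OF that], symmetric])
  then show "\<And>x i. e < norm (x::'a) \<Longrightarrow> pd ?f i x = 2 * \<phi>1 (x \<bullet> x) * (x \<bullet> i)" by simp
  have DP: "((\<lambda>y. 2 * \<phi>1 (y \<bullet> y) * (y \<bullet> i)) has_derivative
      (\<lambda>h. 2 * (\<phi>2 (x \<bullet> x) * (2 * (x \<bullet> h))) * (x \<bullet> i) + 2 * \<phi>1 (x \<bullet> x) * (h \<bullet> i))) (at x)"
    if "x \<in> ?S" for x i
  proof -
    have "((\<lambda>y. \<phi>1 (y \<bullet> y)) has_derivative (\<lambda>h. \<phi>2 (x \<bullet> x) * (2 * (x \<bullet> h)))) (at x)"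
      by (rule comp_inner[OF d2[OF inS[OF that]]])
    moreover have li: "((\<lambda>y. y \<bullet> i) has_derivative (\<lambda>h. h \<bullet> i)) (at x)"
      by (rule bounded_linear_imp_has_derivative[OF bounded_linear_inner_left])
    ultimately have "((\<lambda>y. 2 * \<phi>1 (y \<bullet> y) * (y \<bullet> i)) has_derivative
      (\<lambda>h. 2 * (\<phi>2 (x \<bullet> x) * (2 * (x \<bullet> h))) * (x \<bullet> i) + 2 * \<phi>1 (x \<bullet> x) * (h \<bullet> i))) (at x)"
      by (intro has_derivative_eq_rhs[OF has_derivative_mult[OF has_derivative_mult[OF has_derivative_const]]]
         ) (auto simp: fun_eq_iff algebra_simps)
    then show ?thesis .
  qed
  have Dpd: "(pd ?f i has_derivative
      (\<lambda>h. 2 * (\<phi>2 (x \<bullet> x) * (2 * (x \<bullet> h))) * (x \<bullet> i) + 2 * \<phi>1 (x \<bullet> x) * (h \<bullet> i))) (at x)"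
    if "x \<in> ?S" for x i
    by (rule has_derivative_transform_within_open[OF DP[OF that] opS that]) (simp add: pdf)
  have pd2: "pd (pd ?f i) j x = 4 * \<phi>2 (x \<bullet> x) * (x \<bullet> j) * (x \<bullet> i) + 2 * \<phi>1 (x \<bullet> x) * (j \<bullet> i)"
    if "x \<in> ?S" for x i j
  proof -
    have fd: "frechet_derivative (pd ?f i) (at x) = (\<lambda>h. 2 * (\<phi>2 (x \<bullet> x) * (2 * (x \<bullet> h))) * (x \<bullet> i) + 2 * \<phi>1 (x \<bullet> x) * (h \<bullet> i))"
      by (rule frechet_derivative_at[OF Dpd[OF that, of i], symmetric])
    have "pd (pd ?f i) j x = 2 * (\<phi>2 (x \<bullet> x) * (2 * (x \<bullet> j))) * (x \<bullet> i) + 2 * \<phi>1 (x \<bullet> x) * (j \<bullet> i)"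
      by (subst pd_def) (simp only: fd)
    then show ?thesis by simp
  qed
  have cphi1: "continuous_on {e\<^sup>2<..} \<phi>1"
    using d2 by (intro continuous_at_imp_continuous_on ballI DERIV_isCont) auto
  have img: "(\<lambda>x. x \<bullet> x) ` ?S \<subseteq> {e\<^sup>2<..}" using inS by auto
  have c1S: "continuous_on ?S (\<lambda>x. \<phi>1 (x \<bullet> x))"
    by (rule continuous_on_compose2[OF cphi1 _ img]) (intro continuous_intros)
  have c2S: "continuous_on ?S (\<lambda>x. \<phi>2 (x \<bullet> x))"
    by (rule continuous_on_compose2[OF c2 _ img]) (intro continuous_intros)
  have C2: "C2_on ?S ?f"
    unfolding C2_on_def
  proof (intro conjI ballI)
    show "open ?S" by (rule opS)
    show "?f differentiable at x" if "x \<in> ?S" for x using Df[OF that] by (rule differentiableI)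
    show "pd ?f i differentiable at x" if "x \<in> ?S" for x i using Dpd[OF that] by (rule differentiableI)
    show "continuous_on ?S (pd ?f i)" for i
    proof (rule continuous_on_cong[THEN iffD2])
      show "continuous_on ?S (\<lambda>x. 2 * \<phi>1 (x \<bullet> x) * (x \<bullet> i))" by (intro continuous_intros c1S)
    qed (auto simp: pdf)
    show "continuous_on ?S (pd (pd ?f i) j)" for i j
    proof (rule continuous_on_cong[THEN iffD2])
      show "continuous_on ?S (\<lambda>x. 4 * \<phi>2 (x \<bullet> x) * (x \<bullet> j) * (x \<bullet> i) + 2 * \<phi>1 (x \<bullet> x) * (j \<bullet> i))"
        by (intro continuous_intros c1S c2S)
    qed (auto simp: pd2)
  qed
  have "laplacian ?f x = 0" if "x \<in> ?S" for x
  proof -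
    have "laplacian ?f x = (\<Sum>i\<in>Basis. 4 * \<phi>2 (x \<bullet> x) * ((x \<bullet> i) * (x \<bullet> i)) + 2 * \<phi>1 (x \<bullet> x))"
      unfolding laplacian_def using that by (intro sum.cong) (auto simp: pd2)
    also have "\<dots> = 4 * \<phi>2 (x \<bullet> x) * (\<Sum>i\<in>Basis. (x \<bullet> i) * (x \<bullet> i)) + 2 * DIM('a) * \<phi>1 (x \<bullet> x)"
      by (simp add: sum.distrib sum_distrib_left)
    also have "(\<Sum>i\<in>Basis. (x \<bullet> i) * (x \<bullet> i)) = x \<bullet> x" by (simp add: euclidean_inner[of x x])
    also have "4 * \<phi>2 (x \<bullet> x) * (x \<bullet> x) + 2 * DIM('a) * \<phi>1 (x \<bullet> x) = 0"
      using lap[OF inS[OF that]] by (simp add: algebra_simps)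
    finally show ?thesis .
  qed
  with C2 show "harmonic_on ?S ?f" unfolding harmonic_on_def by blast
qed

lemma cont_local:
  fixes h :: "'a::euclidean_space \<Rightarrow> real"
  assumes "\<And>x. \<exists>U. open U \<and> x \<in> U \<and> continuous_on U h"
  shows "continuous_on UNIV h"
proof -
  have "isCont h x" for x
  proof -
    obtain U where "open U" "x \<in> U" "continuous_on U h" using assms by blast
    then show ?thesis using continuous_on_eq_continuous_at by blast
  qed
  then show ?thesis by (simp add: continuous_on_eq_continuous_at)
qed

lemma deriv_locconst:
  fixes g :: "'a::euclidean_space \<Rightarrow> real"
  assumes "open U" "x \<in> U" "\<And>y. y \<in> U \<Longrightarrow> g y = c"
  shows "(g has_derivative (\<lambda>_. 0)) (at x)"
proof -
  have "((\<lambda>_. c) has_derivative (\<lambda>_. 0)) (at x)" by simp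
  then show ?thesis
    by (rule has_derivative_transform_within_open[OF _ assms(1,2)]) (use assms(3) in auto)
qed

lemma pd_locconst:
  fixes g :: "'a::euclidean_space \<Rightarrow> real"
  assumes "open U" "x \<in> U" "\<And>y. y \<in> U \<Longrightarrow> g y = c"
  shows "pd g i x = 0"
proof -
  have "(g has_derivative (\<lambda>_. 0)) (at x)" by (rule deriv_locconst[OF assms(1,2)]) (rule assms(3))
  then have "frechet_derivative g (at x) = (\<lambda>_. 0)" by (rule frechet_derivative_at[symmetric])
  then show ?thesis unfolding pd_def by simp
qed

lemma open_norm_gt: "open {x::'a::euclidean_space. e < norm x}"
  by (intro open_Collect_less continuous_intros)

lemma open_norm_lt: "open {x::'a::euclidean_space. norm x < e}"
  by (intro open_Collect_less continuous_intros)

lemma test_props: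
  fixes g :: "'a::euclidean_space \<Rightarrow> real"
  assumes "test_fn r g"
  shows "\<And>x. (g has_derivative frechet_derivative g (at x)) (at x)"
    and "\<And>x i. norm x < r \<Longrightarrow> pd g i x = 0"
    and "\<exists>R. (\<forall>x. R \<le> norm x \<longrightarrow> g x = 0) \<and> (\<forall>x i. R < norm x \<longrightarrow> pd g i x = 0)"
    and "continuous_on UNIV g"
    and "\<And>i. i \<in> Basis \<Longrightarrow> continuous_on UNIV (pd g i)"
proof -
  have d: "\<And>x. g differentiable (at x)" using assms unfolding test_fn_def by blast
  show D: "\<And>x. (g has_derivative frechet_derivative g (at x)) (at x)"
    using d frechet_derivative_works by blast
  show "pd g i x = 0" if "norm x < r" for x i
    by (rule pd_locconst[OF open_norm_lt, where x=x and g=g and c="g 0"]) (use that assms in \<open>auto simp: test_fn_def\<close>)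
  obtain R where R: "\<forall>x. R \<le> norm x \<longrightarrow> g x = 0" using assms unfolding test_fn_def by blast
  moreover have "\<forall>x i. R < norm x \<longrightarrow> pd g i x = 0"
  proof (intro allI impI)
    fix x :: 'a and i assume "R < norm x"
    then show "pd g i x = 0"
      by (rule pd_locconst[OF open_norm_gt, where x=x and g=g and c=0, simplified]) (use R in auto)
  qed
  ultimately show "\<exists>R. (\<forall>x. R \<le> norm x \<longrightarrow> g x = 0) \<and> (\<forall>x i. R < norm x \<longrightarrow> pd g i x = 0)" by blast
  show "continuous_on UNIV g"
    using D has_derivative_continuous continuous_at_imp_continuous_on by blast
  show "\<And>i. i \<in> Basis \<Longrightarrow> continuous_on UNIV (pd g i)" using assms unfolding test_fn_def by blast
qed

lemma harmonic_props:
  assumes "harmonic_on {x::'a::euclidean_space. e < norm x} f"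
  shows "\<And>i. i \<in> Basis \<Longrightarrow> continuous_on {x. e < norm x} (pd f i)"
    and "\<And>i j. i \<in> Basis \<Longrightarrow> j \<in> Basis \<Longrightarrow> continuous_on {x. e < norm x} (pd (pd f i) j)"
    and "\<And>x. e < norm x \<Longrightarrow> laplacian f x = 0"
    and "\<And>x i. e < norm x \<Longrightarrow> i \<in> Basis \<Longrightarrow> (pd f i has_derivative frechet_derivative (pd f i) (at x)) (at x)"
    and "\<And>x. e < norm x \<Longrightarrow> (f has_derivative frechet_derivative f (at x)) (at x)"
  using assms unfolding harmonic_on_def C2_on_def
  by (auto intro: frechet_derivative_works[THEN iffD1])

lemma grad_integrable:
  fixes f g :: "'a::euclidean_space \<Rightarrow> real"
  assumes hf: "harmonic_on {x. e < norm x} f" and r: "e < r" and g: "test_fn r g"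
  shows "(\<lambda>x. if e < norm x then grad_dot f g x else 0) integrable_on UNIV"
    and "continuous_on UNIV (\<lambda>x. if e < norm x then grad_dot f g x else 0)"
proof -
  let ?G = "\<lambda>x. if e < norm x then grad_dot f g x else 0"
  obtain R where R: "\<forall>x. R \<le> norm x \<longrightarrow> g x = 0" "\<forall>x i. R < norm x \<longrightarrow> pd g i x = 0"
    using test_props(3)[OF g] by blast
  have cont: "continuous_on UNIV ?G"
  proof (rule cont_local)
    fix x :: 'a
    show "\<exists>U. open U \<and> x \<in> U \<and> continuous_on U ?G"
    proof (cases "norm x < r")
      case True
      have "continuous_on {y. norm y < r} ?G"
      proof (rule continuous_on_cong[THEN iffD2])
        show "continuous_on {y::'a. norm y < r} (\<lambda>_. 0::real)" by simp
        show "?G y = 0" if "y \<in> {y. norm y < r}" for y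
          using that test_props(2)[OF g] by (simp add: grad_dot_def)
      qed simp
      then show ?thesis using True open_norm_lt by blast
    next
      case False
      have "continuous_on {y. e < norm y} ?G"
      proof (rule continuous_on_cong[THEN iffD2])
        show "continuous_on {y::'a. e < norm y} (grad_dot f g)"
          unfolding grad_dot_def
        proof (intro continuous_on_sum continuous_on_mult)
          fix i :: 'a assume i: "i \<in> Basis"
          show "continuous_on {y::'a. e < norm y} (pd f i)" by (rule harmonic_props(1)[OF hf i])
          show "continuous_on {y::'a. e < norm y} (pd g i)"
            by (rule continuous_on_subset[OF test_props(5)[OF g i]]) simp
        qed
      qed auto
      moreover have "x \<in> {y. e < norm y}" using False r by simp
      ultimately show ?thesis using open_norm_gt by blast
    qed
  qed
  then show "continuous_on UNIV ?G" .
  have z: "?G x = 0" if "R + 1 \<le> norm x" for x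
  proof -
    have "pd g i x = 0" for i using R(2) that by simp
    then show ?thesis by (simp add: grad_dot_def)
  qed
  show "?G integrable_on UNIV"
    using cs_integrable[OF cont z] by blast
qed



lemma weak_harmonic:
  fixes f g :: "'a::euclidean_space \<Rightarrow> real"
  assumes hf: "harmonic_on {x. e < norm x} f" and r: "e < r" and g: "test_fn r g" and g0: "g 0 = 0"
  shows "integral {x. e < norm x} (grad_dot f g) = 0"
proof -
  define e' where "e' = (e + r) / 2"
  have e': "e < e'" "e' < r" using r unfolding e'_def by auto
  have gz: "g x = 0" if "norm x \<le> r" for x using g g0 that unfolding test_fn_def by auto
  obtain R where R: "\<forall>x. R \<le> norm x \<longrightarrow> g x = 0" "\<forall>x i. R < norm x \<longrightarrow> pd g i x = 0"
    using test_props(3)[OF g] by blast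
  define F where "F i x = (if e' < norm x then pd f i x * g x else 0)" for i x
  define F' where "F' i x = (\<lambda>h. if norm x < r then 0
      else pd f i x * frechet_derivative g (at x) h + frechet_derivative (pd f i) (at x) h * g x)" for i x
  define P where "P i y = pd f i y * pd g i y + pd (pd f i) i y * g y" for i y
  have F'i: "F' i x i = (if norm x < r then 0 else P i x)" for i x
    unfolding F'_def P_def pd_def by simp
  have Fder: "(F i has_derivative F' i x) (at x)" if i: "i \<in> Basis" for i x
  proof (cases "norm x < r")
    case True
    have "(F i has_derivative (\<lambda>_. 0)) (at x)"
    proof (rule deriv_locconst[OF open_norm_lt])
      show "x \<in> {x. norm x < r}" using True by simp
      show "F i y = 0" if "y \<in> {x. norm x < r}" for y using that gz unfolding F_def by auto
    qed
    moreover have "F' i x = (\<lambda>_. 0)" using True unfolding F'_def by simp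
    ultimately show ?thesis by simp
  next
    case False
    then have xe: "e < norm x" "e' < norm x" using e' by auto
    have "((\<lambda>y. pd f i y * g y) has_derivative
        (\<lambda>h. pd f i x * frechet_derivative g (at x) h + frechet_derivative (pd f i) (at x) h * g x)) (at x)"
      by (rule has_derivative_mult[OF harmonic_props(4)[OF hf xe(1) i] test_props(1)[OF g]])
    then have "((\<lambda>y. pd f i y * g y) has_derivative F' i x) (at x)"
      using False unfolding F'_def by simp
    then show ?thesis
      by (rule has_derivative_transform_within_open[OF _ open_norm_gt[of e']])
         (use xe in \<open>auto simp: F_def\<close>)
  qed
  have Pcont: "continuous_on {y. e' < norm y} (P i)" if i: "i \<in> Basis" for i
  proof -
    have sub: "{y::'a. e' < norm y} \<subseteq> {y. e < norm y}" using e' by auto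
    show ?thesis unfolding P_def
      by (intro continuous_intros continuous_on_subset[OF harmonic_props(1)[OF hf i] sub]
          continuous_on_subset[OF harmonic_props(2)[OF hf i i] sub]
          continuous_on_subset[OF test_props(5)[OF g i]] continuous_on_subset[OF test_props(4)[OF g]]) auto
  qed
  have F'cont: "continuous_on UNIV (\<lambda>x. F' i x i)" if i: "i \<in> Basis" for i
  proof (rule cont_local)
    fix x :: 'a
    show "\<exists>U. open U \<and> x \<in> U \<and> continuous_on U (\<lambda>x. F' i x i)"
    proof (cases "norm x < r")
      case True
      have "continuous_on {y. norm y < r} (\<lambda>x. F' i x i)"
      proof (rule continuous_on_cong[THEN iffD2])
        show "continuous_on {y::'a. norm y < r} (\<lambda>_. 0::real)" by simp
      qed (auto simp: F'i)
      then show ?thesis using True open_norm_lt by blast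
    next
      case False
      have "continuous_on {y. e' < norm y} (\<lambda>x. F' i x i)"
      proof (rule continuous_on_cong[THEN iffD2])
        show "continuous_on {y. e' < norm y} (P i)" by (rule Pcont[OF i])
        show "F' i y i = P i y" if "y \<in> {y. e' < norm y}" for y
        proof (cases "norm y < r")
          case True
          then have "pd g i y = 0" "g y = 0" using test_props(2)[OF g] gz by auto
          then show ?thesis using True by (simp add: F'i P_def)
        qed (simp add: F'i)
      qed simp
      moreover have "x \<in> {y. e' < norm y}" using False e' by simp
      ultimately show ?thesis using open_norm_gt by blast
    qed
  qed
  have Fsupp: "F i x = 0" if "R \<le> norm x" for i x using R(1) that unfolding F_def by auto
  have F'z: "F' i x i = 0" if "R + 1 \<le> norm x" for i x
  proof -
    have "pd g i x = 0" "g x = 0" using R that by auto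
    then show ?thesis by (simp add: F'i P_def)
  qed
  have int0: "integral UNIV (\<lambda>x. F' i x i) = 0" if i: "i \<in> Basis" for i
    by (rule integral_partial_zero[OF i Fder[OF i] F'cont[OF i] Fsupp])
  have intg: "(\<lambda>x. F' i x i) integrable_on UNIV" if i: "i \<in> Basis" for i
    using cs_integrable[OF F'cont[OF i] F'z] by blast
  have sumeq: "(\<Sum>i\<in>Basis. F' i x i) = (if x \<in> {x. e < norm x} then grad_dot f g x else 0)" for x
  proof (cases "norm x < r")
    case True
    then have "pd g i x = 0" for i using test_props(2)[OF g] by auto
    then show ?thesis using True by (simp add: F'i grad_dot_def)
  next
    case False
    then have xe: "e < norm x" using e' by auto
    have "(\<Sum>i\<in>Basis. F' i x i) = (\<Sum>i\<in>Basis. pd f i x * pd g i x) + (\<Sum>i\<in>Basis. pd (pd f i) i x) * g x"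
      using False by (simp add: F'i P_def sum.distrib sum_distrib_right)
    also have "(\<Sum>i\<in>Basis. pd (pd f i) i x) = 0"
      using harmonic_props(3)[OF hf xe] unfolding laplacian_def .
    finally show ?thesis using xe by (simp add: grad_dot_def)
  qed
  have "integral {x. e < norm x} (grad_dot f g) = integral UNIV (\<lambda>x. \<Sum>i\<in>Basis. F' i x i)"
    unfolding sumeq integral_restrict_UNIV ..
  also have "\<dots> = (\<Sum>i\<in>Basis. integral UNIV (\<lambda>x. F' i x i))"
    by (rule integral_sum) (auto intro: intg)
  also have "\<dots> = 0" using int0 by simp
  finally show ?thesis .
qed

lemma flux_form:
  fixes f g g0 :: "'a::euclidean_space \<Rightarrow> real"
  assumes hf: "harmonic_on {x. e < norm x} f"
    and r0: "e < r0" and g0: "test_fn r0 g0" and g00: "g0 0 = 1"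
    and r: "e < r" and g: "test_fn r g"
  shows "integral {x. e < norm x} (grad_dot f g) = g 0 * integral {x. e < norm x} (grad_dot f g0)"
proof -
  define h where "h x = g x - g 0 * g0 x" for x
  have hder: "(h has_derivative (\<lambda>v. frechet_derivative g (at x) v - g 0 * frechet_derivative g0 (at x) v)) (at x)" for x
    unfolding h_def
    by (intro has_derivative_diff has_derivative_mult_right test_props(1)[OF g] test_props(1)[OF g0])
  have pdh: "pd h i x = pd g i x - g 0 * pd g0 i x" for i x
    unfolding pd_def using frechet_derivative_at[OF hder[of x], symmetric] by simp
  obtain R1 where R1: "\<forall>x. R1 \<le> norm x \<longrightarrow> g x = 0" using g unfolding test_fn_def by blast
  obtain R2 where R2: "\<forall>x. R2 \<le> norm x \<longrightarrow> g0 x = 0" using g0 unfolding test_fn_def by blast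
  have th: "test_fn (min r r0) h"
    unfolding test_fn_def
  proof (intro conjI allI ballI impI)
    show "h differentiable at x" for x using hder[of x] by (rule differentiableI)
    show "continuous_on UNIV (pd h i)" if "i \<in> Basis" for i
      unfolding pdh[abs_def]
      by (intro continuous_intros test_props(5)[OF g that] test_props(5)[OF g0 that])
    show "\<exists>R. \<forall>x. R \<le> norm x \<longrightarrow> h x = 0"
      by (rule exI[of _ "max R1 R2"]) (use R1 R2 in \<open>auto simp: h_def\<close>)
    show "h x = h 0" if "norm x \<le> min r r0" for x
      using that g g0 g00 unfolding test_fn_def h_def by auto
  qed
  have h0: "h 0 = 0" unfolding h_def using g00 by simp
  have z: "integral {x. e < norm x} (grad_dot f h) = 0"
    by (rule weak_harmonic[OF hf _ th h0]) (use r r0 in auto)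
  have eq: "grad_dot f h = (\<lambda>x. grad_dot f g x - g 0 * grad_dot f g0 x)"
    unfolding grad_dot_def pdh by (simp add: algebra_simps sum_subtractf sum_distrib_left fun_eq_iff)
  have i1: "grad_dot f g integrable_on {x. e < norm x}"
    using grad_integrable(1)[OF hf r g] integrable_restrict_UNIV[of "{x. e < norm x}" "grad_dot f g"] by simp
  have i2: "grad_dot f g0 integrable_on {x. e < norm x}"
    using grad_integrable(1)[OF hf r0 g0] integrable_restrict_UNIV[of "{x. e < norm x}" "grad_dot f g0"] by simp
  have "integral {x. e < norm x} (grad_dot f h) = integral {x. e < norm x} (grad_dot f g) - integral {x. e < norm x} (\<lambda>x. g 0 * grad_dot f g0 x)"
  proof -
    have i3: "(\<lambda>x. g 0 * grad_dot f g0 x) integrable_on {x. e < norm x}"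
      using integrable_on_cmult_left[OF i2, of "g 0"] by simp
    show ?thesis unfolding eq by (rule integral_diff[OF i1 i3])
  qed
  also have "integral {x. e < norm x} (\<lambda>x. g 0 * grad_dot f g0 x) = g 0 * integral {x. e < norm x} (grad_dot f g0)"
    by (rule integral_mult_right)
  finally show ?thesis using z by simp
qed

lemma sqp_deriv: "((\<lambda>u::real. (max u 0)\<^sup>2) has_real_derivative 2 * max u 0) (at u)"
proof (cases "u = 0")
  case True
  have lim: "((\<lambda>h::real. max h 0) \<longlongrightarrow> 0) (at 0)"
  proof -
    have "((\<lambda>h::real. max h 0) \<longlongrightarrow> max 0 0) (at 0)" by (intro tendsto_intros)
    then show ?thesis by simp
  qed
  have "((\<lambda>h::real. ((max (0 + h) 0)\<^sup>2 - (max 0 0)\<^sup>2) / h) \<longlongrightarrow> 0) (at 0)"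
  proof (rule Lim_transform_eventually[OF lim])
    show "\<forall>\<^sub>F h in at (0::real). max h 0 = ((max (0 + h) 0)\<^sup>2 - (max 0 0)\<^sup>2) / h"
      unfolding eventually_at_filter
      by (rule always_eventually) (auto simp: power2_eq_square max_def)
  qed
  then show ?thesis using True by (simp add: DERIV_def)
next
  case False
  show ?thesis
  proof (cases "u > 0")
    case True
    have "((\<lambda>u::real. u\<^sup>2) has_real_derivative 2 * u) (at u)"
      by (auto intro!: derivative_eq_intros)
    then have "((\<lambda>u::real. (max u 0)\<^sup>2) has_real_derivative 2 * u) (at u)"
      by (rule has_field_derivative_transform_within_open[where S="{0<..}"]) (use True in auto)
    then show ?thesis using True by simp
  next
    case False': False
    then have u: "u < 0" using False by simp
    have "((\<lambda>u::real. 0) has_real_derivative 0) (at u)" by simp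
    then have "((\<lambda>u::real. (max u 0)\<^sup>2) has_real_derivative 0) (at u)"
      by (rule has_field_derivative_transform_within_open[where S="{..<0}"]) (use u in auto)
    then show ?thesis using u by simp
  qed
qed

lemma integral_pos:
  fixes G :: "'a::euclidean_space \<Rightarrow> real"
  assumes c: "continuous_on UNIV G" and int: "G integrable_on UNIV"
    and nn: "\<And>x. G x \<ge> 0" and p: "G x0 > 0"
  shows "integral UNIV G > 0"
proof -
  have "isCont G x0" using c by (simp add: continuous_on_eq_continuous_at)
  then obtain d where d: "d > 0" and dd: "\<And>y. dist y x0 < d \<Longrightarrow> dist (G y) (G x0) < G x0 / 2"
    unfolding continuous_at_eps_delta using p by (metis half_gt_zero)
  define c where "c = d / (2 * DIM('a))"
  have cpos: "c > 0" unfolding c_def using d by simp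
  define B where "B = cbox (x0 - c *\<^sub>R One) (x0 + c *\<^sub>R One)"
  have inB: "G y \<ge> G x0 / 2" if "y \<in> B" for y
  proof -
    have "\<bar>(y - x0) \<bullet> i\<bar> \<le> c" if "i \<in> Basis" for i
      using \<open>y \<in> B\<close> that unfolding B_def mem_box by (auto simp: inner_diff_left inner_add_left abs_le_iff)
    then have "(\<Sum>i\<in>Basis. \<bar>(y - x0) \<bullet> i\<bar>) \<le> (\<Sum>i\<in>(Basis::'a set). c)"
      by (intro sum_mono) auto
    also have "\<dots> = DIM('a) * c" by simp
    also have "\<dots> = d / 2" unfolding c_def by simp
    finally have "norm (y - x0) \<le> d / 2" using norm_le_l1[of "y - x0"] by linarith
    then have "dist y x0 < d" using d by (simp add: dist_norm)
    then have "dist (G y) (G x0) < G x0 / 2" by (rule dd)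
    then have "\<bar>G y - G x0\<bar> < G x0 / 2" by (simp add: dist_real_def)
    then show ?thesis by linarith
  qed
  have cB: "measure lborel B > 0" unfolding B_def using cpos
    by (intro content_pos_lt) (auto simp: inner_add_left inner_diff_left)
  define H where "H y = (if y \<in> B then G x0 / 2 else 0)" for y
  have "((\<lambda>y. G x0 / 2) has_integral (measure lborel B *\<^sub>R (G x0 / 2))) B"
    unfolding B_def by (rule has_integral_const)
  then have HI: "(H has_integral (measure lborel B * (G x0 / 2))) UNIV"
    unfolding H_def using has_integral_restrict_UNIV[of B "\<lambda>y. G x0 / 2"] by simp
  have "integral UNIV H \<le> integral UNIV G"
    by (rule integral_le[OF HI[THEN has_integral_integrable] int]) (use inB nn in \<open>auto simp: H_def\<close>)
  moreover have "integral UNIV H = measure lborel B * (G x0 / 2)" using HI by (rule integral_unique)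
  moreover have "measure lborel B * (G x0 / 2) > 0" using cB p by simp
  ultimately show ?thesis by linarith
qed

definition hat :: "real \<Rightarrow> real \<Rightarrow> real \<Rightarrow> real" where
  "hat a b s = max (s - a) 0 - 2 * max (s - (a + b) / 2) 0 + max (s - b) 0"

definition psi :: "real \<Rightarrow> real \<Rightarrow> real \<Rightarrow> real" where
  "psi a b s = 1 - ((max (s - a) 0)\<^sup>2 - 2 * (max (s - (a + b) / 2) 0)\<^sup>2 + (max (s - b) 0)\<^sup>2)
     / (2 * ((b - a) / 2)\<^sup>2)"

definition psi' :: "real \<Rightarrow> real \<Rightarrow> real \<Rightarrow> real" where
  "psi' a b s = - hat a b s / ((b - a) / 2)\<^sup>2"

lemma sqp_shift: "((\<lambda>s::real. (max (s - c) 0)\<^sup>2) has_real_derivative 2 * max (s - c) 0) (at s)"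
proof -
  have "((\<lambda>s::real. s - c) has_real_derivative 1) (at s)" by (auto intro!: derivative_eq_intros)
  from DERIV_chain2[OF sqp_deriv this] show ?thesis by simp
qed

lemma psi_deriv:
  assumes "a < b"
  shows "(psi a b has_real_derivative psi' a b s) (at s)"
proof -
  have "((\<lambda>s. 1 - ((max (s - a) 0)\<^sup>2 - 2 * (max (s - (a + b) / 2) 0)\<^sup>2 + (max (s - b) 0)\<^sup>2)
     / (2 * ((b - a) / 2)\<^sup>2)) has_real_derivative
     0 - ((2 * max (s - a) 0 - 2 * (2 * max (s - (a + b) / 2) 0)) + 2 * max (s - b) 0) / (2 * ((b - a) / 2)\<^sup>2)) (at s)"
    by (intro DERIV_diff DERIV_const DERIV_cdivide DERIV_add DERIV_cmult sqp_shift)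
  then show ?thesis unfolding psi_def[abs_def]
  proof (rule DERIV_cong)
    show "0 - ((2 * max (s - a) 0 - 2 * (2 * max (s - (a + b) / 2) 0)) + 2 * max (s - b) 0) / (2 * ((b - a) / 2)\<^sup>2)
      = psi' a b s"
      unfolding psi'_def hat_def using assms by (simp add: field_simps)
  qed
qed

lemma psi'_cont: "a < b \<Longrightarrow> continuous_on UNIV (psi' a b)"
  unfolding psi'_def[abs_def] hat_def by (intro continuous_intros) auto

lemma hat_nonneg:
  assumes "a < b" shows "hat a b s \<ge> 0"
proof -
  define m where "m = (a + b) / 2"
  have m: "a < m" "m < b" "2 * m = a + b" using assms unfolding m_def by auto
  have "max (s - a) 0 - 2 * max (s - m) 0 + max (s - b) 0 \<ge> 0"
    using m unfolding max_def by auto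
  then show ?thesis unfolding hat_def m_def .
qed

lemma psi'_nonpos: "a < b \<Longrightarrow> psi' a b s \<le> 0"
  unfolding psi'_def using hat_nonneg[of a b s] by (simp add: divide_nonneg_pos)

lemma psi'_neg: "a < b \<Longrightarrow> psi' a b ((a + b) / 2) < 0"
  unfolding psi'_def hat_def by (simp add: max_def field_simps)

lemma psi_one: "s \<le> a \<Longrightarrow> a < b \<Longrightarrow> psi a b s = 1"
  unfolding psi_def by (simp add: max_def)

lemma psi_zero:
  assumes "b \<le> s" "a < b" shows "psi a b s = 0"
proof -
  have "max (s - a) 0 = s - a" "max (s - (a + b) / 2) 0 = s - (a + b) / 2" "max (s - b) 0 = s - b"
    using assms by auto
  moreover have "(s - a)\<^sup>2 - 2 * (s - (a + b) / 2)\<^sup>2 + (s - b)\<^sup>2 = 2 * ((b - a) / 2)\<^sup>2"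
    by (simp add: power2_eq_square algebra_simps)
  moreover have "2 * ((b - a) / 2)\<^sup>2 \<noteq> 0" using assms by simp
  ultimately show ?thesis unfolding psi_def by simp
qed

lemma std_test:
  fixes a b :: real
  assumes a: "0 < a" "a < b"
  shows "test_fn (sqrt a) (\<lambda>x::'a::euclidean_space. psi a b (x \<bullet> x))"
    and "(\<lambda>x::'a. psi a b (x \<bullet> x)) 0 = 1"
    and "\<And>x i. pd (\<lambda>x::'a. psi a b (x \<bullet> x)) i x = psi' a b (x \<bullet> x) * (2 * (x \<bullet> i))"
proof -
  let ?g = "\<lambda>x::'a. psi a b (x \<bullet> x)"
  have D: "(?g has_derivative (\<lambda>h. psi' a b (x \<bullet> x) * (2 * (x \<bullet> h)))) (at x)" for x
    by (rule comp_inner[OF psi_deriv[OF a(2)]])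
  show pdg: "pd ?g i x = psi' a b (x \<bullet> x) * (2 * (x \<bullet> i))" for x i
    unfolding pd_def by (simp only: frechet_derivative_at[OF D, symmetric])
  show g0: "?g 0 = 1" using psi_one[of 0 a b] a by simp
  show "test_fn (sqrt a) ?g"
    unfolding test_fn_def
  proof (intro conjI allI ballI impI)
    show "?g differentiable at x" for x using D[of x] by (rule differentiableI)
    show "continuous_on UNIV (pd ?g i)" for i
      unfolding pdg[abs_def]
      by (intro continuous_intros continuous_on_compose2[OF psi'_cont[OF a(2)]]) auto
    show "\<exists>R. \<forall>x. R \<le> norm x \<longrightarrow> ?g x = 0"
    proof (intro exI allI impI)
      fix x :: 'a assume "sqrt b \<le> norm x"
      then have "(sqrt b)\<^sup>2 \<le> (norm x)\<^sup>2" using a by (intro power_mono) auto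
      then have "b \<le> x \<bullet> x" using a by (simp add: dot_square_norm)
      then show "?g x = 0" using psi_zero a by auto
    qed
    show "?g x = ?g 0" if "norm x \<le> sqrt a" for x
    proof -
      have "(norm x)\<^sup>2 \<le> (sqrt a)\<^sup>2" using that by (intro power_mono) auto
      then have "x \<bullet> x \<le> a" using a by (simp add: dot_square_norm)
      then show ?thesis using psi_one a g0 by auto
    qed
  qed
qed

lemma flux_pos:
  fixes \<phi> dphi :: "real \<Rightarrow> real" and e a b :: real
  assumes hf: "harmonic_on {x::'a::euclidean_space. e < norm x} (\<lambda>x. \<phi> (x \<bullet> x))"
    and pdf: "\<And>x i. e < norm (x::'a) \<Longrightarrow> pd (\<lambda>x. \<phi> (x \<bullet> x)) i x = 2 * dphi (x \<bullet> x) * (x \<bullet> i)"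
    and neg: "\<And>s. e\<^sup>2 < s \<Longrightarrow> dphi s < 0"
    and e: "0 \<le> e" and ea: "e\<^sup>2 < a" and ab: "a < b"
  shows "integral {x::'a. e < norm x} (grad_dot (\<lambda>x. \<phi> (x \<bullet> x)) (\<lambda>x. psi a b (x \<bullet> x))) > 0"
proof -
  let ?f = "\<lambda>x::'a. \<phi> (x \<bullet> x)"
  let ?g = "\<lambda>x::'a. psi a b (x \<bullet> x)"
  let ?G = "\<lambda>x. if e < norm x then grad_dot ?f ?g x else 0"
  have a0: "0 < a" using ea e by (smt (verit) zero_le_power2)
  have ra: "e < sqrt a" using ea e by (metis real_less_rsqrt)
  have gt: "test_fn (sqrt a) ?g" by (rule std_test(1)[OF a0 ab])
  have gd: "grad_dot ?f ?g x = 4 * dphi (x \<bullet> x) * psi' a b (x \<bullet> x) * (x \<bullet> x)" if "e < norm x" for x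
  proof -
    have "grad_dot ?f ?g x = (\<Sum>i\<in>Basis. 4 * dphi (x \<bullet> x) * psi' a b (x \<bullet> x) * ((x \<bullet> i) * (x \<bullet> i)))"
      unfolding grad_dot_def using that
      by (intro sum.cong) (auto simp: pdf std_test(3)[OF a0 ab])
    also have "\<dots> = 4 * dphi (x \<bullet> x) * psi' a b (x \<bullet> x) * (\<Sum>i\<in>Basis. (x \<bullet> i) * (x \<bullet> i))"
      by (simp add: sum_distrib_left)
    also have "(\<Sum>i\<in>Basis. (x \<bullet> i) * (x \<bullet> i)) = x \<bullet> x" by (simp add: euclidean_inner[of x x])
    finally show ?thesis .
  qed
  have nn: "?G x \<ge> 0" for x
  proof (cases "e < norm x")
    case True
    then have "e\<^sup>2 < x \<bullet> x" using norm_gt_iff[OF e] by auto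
    then have "dphi (x \<bullet> x) < 0" "psi' a b (x \<bullet> x) \<le> 0" "x \<bullet> x \<ge> 0"
      using neg psi'_nonpos[OF ab] by auto
    then have h: "0 \<le> dphi (x \<bullet> x) * psi' a b (x \<bullet> x)" "x \<bullet> x \<ge> 0"
      by (auto intro: mult_nonpos_nonpos)
    have "0 \<le> 4 * (dphi (x \<bullet> x) * psi' a b (x \<bullet> x)) * (x \<bullet> x)"
      using h by simp
    then have "0 \<le> 4 * dphi (x \<bullet> x) * psi' a b (x \<bullet> x) * (x \<bullet> x)"
      by (simp add: mult.assoc)
    then show ?thesis using True gd by simp
  qed simp
  obtain i0 :: 'a where i0: "i0 \<in> Basis" using nonempty_Basis by blast
  define m where "m = (a + b) / 2"
  have m: "a < m" "m < b" using ab unfolding m_def by auto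
  define x0 where "x0 = sqrt m *\<^sub>R i0"
  have x0x0: "x0 \<bullet> x0 = m" unfolding x0_def using i0 m a0 by simp
  have ex0: "e < norm x0" using norm_gt_iff[OF e, of x0] x0x0 ea m by simp
  have "dphi m < 0" using neg ea m by simp
  moreover have "psi' a b m < 0" using psi'_neg[OF ab] unfolding m_def .
  ultimately have "0 < 4 * dphi m * psi' a b m * m" using m a0 by (simp add: mult_neg_neg)
  then have p: "?G x0 > 0" using gd[OF ex0] ex0 x0x0 by simp
  have "integral UNIV ?G > 0"
    by (rule integral_pos[OF grad_integrable(2)[OF hf ra gt] grad_integrable(1)[OF hf ra gt] nn p])
  moreover have "integral UNIV ?G = integral {x. e < norm x} (grad_dot ?f ?g)"
    using integral_restrict_UNIV[of "{x. e < norm x}" "grad_dot ?f ?g"] by simp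
  ultimately show ?thesis by simp
qed

lemma powr_radial:
  fixes e q A B :: real
  assumes e: "e > 0" and q: "2 * q = 2 - real DIM('a::euclidean_space)"
  shows "harmonic_on {x::'a. e < norm x} (\<lambda>x. A + B * (x \<bullet> x) powr q)"
    and "\<And>x i. e < norm (x::'a) \<Longrightarrow> pd (\<lambda>x. A + B * (x \<bullet> x) powr q) i x = 2 * (B * (q * (x \<bullet> x) powr (q - 1))) * (x \<bullet> i)"
proof -
  have e2: "e\<^sup>2 > 0" using e by simp
  have pos: "\<And>s. s > e\<^sup>2 \<Longrightarrow> s > 0" using e2 by (meson less_trans)
  have d1: "((\<lambda>s. A + B * s powr q) has_real_derivative B * (q * s powr (q - 1))) (at s)" if "s > e\<^sup>2" for s
    using pos[OF that] by (auto intro!: derivative_eq_intros has_real_derivative_powr)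
  have d2: "((\<lambda>s. B * (q * s powr (q - 1))) has_real_derivative B * (q * ((q - 1) * s powr (q - 1 - 1)))) (at s)"
    if "s > e\<^sup>2" for s
    using pos[OF that] by (auto intro!: derivative_eq_intros has_real_derivative_powr)
  have c2: "continuous_on {e\<^sup>2<..} (\<lambda>s. B * (q * ((q - 1) * s powr (q - 1 - 1))))"
    using e2 by (intro continuous_intros) (auto; smt (verit) zero_le_power2)
  have lap: "4 * s * (B * (q * ((q - 1) * s powr (q - 1 - 1)))) + 2 * DIM('a) * (B * (q * s powr (q - 1))) = 0"
    if "s > e\<^sup>2" for s
  proof -
    have s0: "s > 0" using pos[OF that] .
    have k: "s * s powr (q - 1 - 1) = s powr (q - 1)"
      using powr_mult_base[OF less_imp_le[OF s0], of "q - 1 - 1"] by simp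
    define P where "P = s powr (q - 1)"
    have "4 * s * (B * (q * ((q - 1) * s powr (q - 1 - 1)))) = (4 * B * q * (q - 1)) * (s * s powr (q - 1 - 1))"
      by (simp only: mult_ac)
    also have "\<dots> = (4 * B * q * (q - 1)) * P" unfolding k P_def ..
    finally have 1: "4 * s * (B * (q * ((q - 1) * s powr (q - 1 - 1)))) = (4 * B * q * (q - 1)) * P" .
    have 2: "2 * real DIM('a) * (B * (q * s powr (q - 1))) = (4 - 4 * q) * (B * (q * P))"
      unfolding P_def using q by simp
    have 3: "(4 * B * q * (q - 1)) * P + (4 - 4 * q) * (B * (q * P)) = 0" by (simp add: algebra_simps)
    show ?thesis using 1 2 3 by linarith
  qed
  note R = radial_harmonic[where \<phi>="\<lambda>s. A + B * s powr q", OF _ d1 d2 c2 lap]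
  show "harmonic_on {x::'a. e < norm x} (\<lambda>x. A + B * (x \<bullet> x) powr q)"
    using R(1) e by simp
  show "\<And>x i. e < norm (x::'a) \<Longrightarrow> pd (\<lambda>x. A + B * (x \<bullet> x) powr q) i x = 2 * (B * (q * (x \<bullet> x) powr (q - 1))) * (x \<bullet> i)"
    using R(2) e by simp
qed

lemma ln_radial:
  fixes e A :: real
  assumes e: "e > 0" and dim: "DIM('a::euclidean_space) = 2"
  shows "harmonic_on {x::'a. e < norm x} (\<lambda>x. A + ln (x \<bullet> x) / 2)"
    and "\<And>x i. e < norm (x::'a) \<Longrightarrow> pd (\<lambda>x. A + ln (x \<bullet> x) / 2) i x = 2 * (1 / (2 * (x \<bullet> x))) * (x \<bullet> i)"
proof -
  have e2: "e\<^sup>2 > 0" using e by simp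
  have pos: "\<And>s. s > e\<^sup>2 \<Longrightarrow> s > 0" using e2 by (meson less_trans)
  have d1: "((\<lambda>s. A + ln s / 2) has_real_derivative 1 / (2 * s)) (at s)" if "s > e\<^sup>2" for s
  proof -
    have "((\<lambda>s. A + ln s / 2) has_real_derivative 0 + (1 / s) / 2) (at s)"
      using pos[OF that] by (intro DERIV_add DERIV_const DERIV_cdivide DERIV_ln_divide) auto
    then show ?thesis by (simp add: mult.commute)
  qed
  have d2: "((\<lambda>s. 1 / (2 * s)) has_real_derivative - 1 / (2 * s\<^sup>2)) (at s)" if "s > e\<^sup>2" for s
  proof -
    have s0: "s \<noteq> 0" using that e2 by auto
    have d: "((\<lambda>s. inverse s / 2) has_real_derivative - (inverse s ^ Suc (Suc 0)) / 2) (at s)"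
      by (intro DERIV_cdivide DERIV_inverse s0)
    have f: "(\<lambda>s::real. inverse s / 2) = (\<lambda>s. 1 / (2 * s))"
      by (rule ext) (simp add: inverse_eq_divide)
    have D: "- (inverse s ^ Suc (Suc 0)) / 2 = - 1 / (2 * s\<^sup>2)"
      by (simp add: inverse_eq_divide power2_eq_square)
    show ?thesis using d unfolding f D .
  qed
  have c2: "continuous_on {e\<^sup>2<..} (\<lambda>s. - 1 / (2 * s\<^sup>2))"
    using e2 by (intro continuous_intros) (auto; smt (verit) zero_le_power2)
  have lap: "4 * s * (- 1 / (2 * s\<^sup>2)) + 2 * DIM('a) * (1 / (2 * s)) = 0" if "s > e\<^sup>2" for s
  proof -
    have s0: "s \<noteq> 0" using pos[OF that] by simp
    have "4 * s * (- 1 / (2 * s\<^sup>2)) = - 2 / s" using s0 by (simp add: power2_eq_square)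
    moreover have "2 * real DIM('a) * (1 / (2 * s)) = 2 / s" using dim by simp
    ultimately show ?thesis by simp
  qed
  note R = radial_harmonic[where \<phi>="\<lambda>s. A + ln s / 2", OF _ d1 d2 c2 lap]
  show "harmonic_on {x::'a. e < norm x} (\<lambda>x. A + ln (x \<bullet> x) / 2)"
    using R(1) e by simp
  show "\<And>x i. e < norm (x::'a) \<Longrightarrow> pd (\<lambda>x. A + ln (x \<bullet> x) / 2) i x = 2 * (1 / (2 * (x \<bullet> x))) * (x \<bullet> i)"
    using R(2) e by simp
qed

theorem proposition6p4:
  fixes \<epsilon> \<epsilon>' p :: real
  assumes "CARD('d) \<ge> 3" and "\<epsilon> > 0" and "\<epsilon>' > 0" and "p > 0"
  shows "\<exists>(hD :: real^'d \<Rightarrow> real) (h2 :: real^2 \<Rightarrow> real) a.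
     bmvd_harmonic \<epsilon> \<epsilon>' p hD h2 a \<and>
     a > 0 \<and> (\<forall>x. \<epsilon> < norm x \<longrightarrow> hD x > 0) \<and> (\<forall>x. \<epsilon>' < norm x \<longrightarrow> h2 x > 0) \<and>
     (\<exists>c C. 0 < c \<and> 0 < C \<and> (\<forall>x. \<epsilon> < norm x \<longrightarrow> c \<le> hD x \<and> hD x \<le> C)) \<and>
     (\<exists>R0 c C. 0 < R0 \<and> 0 < c \<and> 0 < C \<and>
        (\<forall>x. \<epsilon>' < norm x \<and> R0 \<le> norm x - \<epsilon>' \<longrightarrow>
           c * (1 + ln (norm x - \<epsilon>')) \<le> h2 x \<and> h2 x \<le> C * (1 + ln (norm x - \<epsilon>'))))"
proof -
  note card = assms(1) and e = assms(2) and e' = assms(3) and pp = assms(4)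
  define q :: real where "q = (2 - real CARD('d)) / 2"
  have qdim: "2 * q = 2 - real DIM(real^'d)" unfolding q_def by simp
  have qneg: "q < 0" unfolding q_def using card by simp
  let ?SD = "{x::real^'d. \<epsilon> < norm x}"
  let ?S2 = "{x::real^2. \<epsilon>' < norm x}"
  let ?rho = "\<lambda>x::real^'d. 0 + 1 * (x \<bullet> x) powr q"
  have hr: "harmonic_on ?SD ?rho" by (rule powr_radial(1)[OF e qdim])
  have pdr: "\<And>x i. \<epsilon> < norm (x::real^'d) \<Longrightarrow> pd ?rho i x = 2 * (1 * (q * (x \<bullet> x) powr (q - 1))) * (x \<bullet> i)"
    by (rule powr_radial(2)[OF e qdim])
  let ?L = "\<lambda>x::real^2. 0 + ln (x \<bullet> x) / 2"
  have dim2: "DIM(real^2) = 2" by simp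
  have hL: "harmonic_on ?S2 ?L" by (rule ln_radial(1)[OF e' dim2])
  have pdL: "\<And>x i. \<epsilon>' < norm (x::real^2) \<Longrightarrow> pd ?L i x = 2 * (1 / (2 * (x \<bullet> x))) * (x \<bullet> i)"
    by (rule ln_radial(2)[OF e' dim2])
  define aD where "aD = (2 * \<epsilon>)\<^sup>2"
  define bD where "bD = (3 * \<epsilon>)\<^sup>2"
  define a2 where "a2 = (2 * \<epsilon>')\<^sup>2"
  define b2 where "b2 = (3 * \<epsilon>')\<^sup>2"
  have aD: "0 < aD" "aD < bD" "\<epsilon>\<^sup>2 < aD" "sqrt aD = 2 * \<epsilon>"
  proof -
    show "0 < aD" "aD < bD" "\<epsilon>\<^sup>2 < aD"
      using e unfolding aD_def bD_def by (auto simp: power2_eq_square)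
    show "sqrt aD = 2 * \<epsilon>" unfolding aD_def using e real_sqrt_abs[of "2 * \<epsilon>"] by (metis abs_of_pos mult_pos_pos zero_less_numeral)
  qed
  have a2: "0 < a2" "a2 < b2" "\<epsilon>'\<^sup>2 < a2" "sqrt a2 = 2 * \<epsilon>'"
  proof -
    show "0 < a2" "a2 < b2" "\<epsilon>'\<^sup>2 < a2"
      using e' unfolding a2_def b2_def by (auto simp: power2_eq_square)
    show "sqrt a2 = 2 * \<epsilon>'" unfolding a2_def using e' real_sqrt_abs[of "2 * \<epsilon>'"] by (metis abs_of_pos mult_pos_pos zero_less_numeral)
  qed
  let ?gD = "\<lambda>x::real^'d. psi aD bD (x \<bullet> x)"
  let ?g2 = "\<lambda>x::real^2. psi a2 b2 (x \<bullet> x)"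
  have gDt: "test_fn (2 * \<epsilon>) ?gD" using std_test(1)[OF aD(1,2)] aD(4) by simp
  have gD0: "?gD 0 = 1" by (rule std_test(2)[OF aD(1,2)])
  have g2t: "test_fn (2 * \<epsilon>') ?g2" using std_test(1)[OF a2(1,2)] a2(4) by simp
  have g20: "?g2 0 = 1" by (rule std_test(2)[OF a2(1,2)])
  define JD where "JD = integral ?SD (grad_dot ?rho ?gD)"
  define J2 where "J2 = integral ?S2 (grad_dot ?L ?g2)"
  have JD: "JD > 0" unfolding JD_def
  proof (rule flux_pos[where \<phi>="\<lambda>s. 0 + 1 * s powr q" and dphi="\<lambda>s. 1 * (q * s powr (q - 1))", OF hr pdr])
    show "1 * (q * s powr (q - 1)) < 0" if "\<epsilon>\<^sup>2 < s" for s
    proof -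
      have "s > 0" using that e by (smt (verit) zero_le_power2)
      then show ?thesis using qneg by (simp add: mult_neg_pos)
    qed
  qed (use e aD in auto)
  define \<beta> where "\<beta> = p * J2 / JD"
  define c0 where "c0 = (\<epsilon>\<^sup>2) powr q"
  have c0: "c0 > 0" unfolding c0_def using e by simp
  define a where "a = 1 + \<bar>\<beta>\<bar> * c0 + \<bar>ln \<epsilon>'\<bar>"
  have a1: "a \<ge> 1 + \<bar>\<beta>\<bar> * c0" "a \<ge> 1 + \<bar>ln \<epsilon>'\<bar>" unfolding a_def using c0 by auto
  define hD where "hD = (\<lambda>x::real^'d. (a + \<beta> * c0) + (- \<beta>) * (x \<bullet> x) powr q)"
  define h2 where "h2 = (\<lambda>x::real^2. (a - ln \<epsilon>') + ln (x \<bullet> x) / 2)"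
  have hDh: "harmonic_on ?SD hD" unfolding hD_def by (rule powr_radial(1)[OF e qdim])
  have pdhD: "pd hD i x = 2 * (- \<beta> * (q * (x \<bullet> x) powr (q - 1))) * (x \<bullet> i)" if "\<epsilon> < norm x" for x i
    unfolding hD_def by (rule powr_radial(2)[OF e qdim that])
  have h2h: "harmonic_on ?S2 h2" unfolding h2_def by (rule ln_radial(1)[OF e' dim2])
  have pdh2: "pd h2 i x = 2 * (1 / (2 * (x \<bullet> x))) * (x \<bullet> i)" if "\<epsilon>' < norm x" for x i
    unfolding h2_def by (rule ln_radial(2)[OF e' dim2 that])
  have gdD: "grad_dot hD g x = - \<beta> * grad_dot ?rho g x" if "\<epsilon> < norm x" for g x
    unfolding grad_dot_def sum_distrib_left pdhD[OF that] pdr[OF that] by (simp add: algebra_simps)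
  have gd2: "grad_dot h2 g x = grad_dot ?L g x" if "\<epsilon>' < norm x" for g x
    unfolding grad_dot_def pdh2[OF that] pdL[OF that] ..
  have flux: "integral ?SD (grad_dot hD gd) + p * integral ?S2 (grad_dot h2 g2) = 0"
    if r: "\<epsilon> < r" and r': "\<epsilon>' < r'" and gd: "test_fn r gd" and g2: "test_fn r' g2" and eq0: "gd 0 = g2 0"
    for gd g2 r r'
  proof -
    have "integral ?SD (grad_dot hD gd) = integral ?SD (\<lambda>x. - \<beta> * grad_dot ?rho gd x)"
      by (rule integral_cong) (simp add: gdD)
    also have "\<dots> = - \<beta> * integral ?SD (grad_dot ?rho gd)" by (rule integral_mult_right)
    also have "integral ?SD (grad_dot ?rho gd) = gd 0 * JD"
      unfolding JD_def by (rule flux_form[OF hr _ gDt gD0 r gd]) (use e in simp)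
    finally have 1: "integral ?SD (grad_dot hD gd) = - \<beta> * (gd 0 * JD)" .
    have "integral ?S2 (grad_dot h2 g2) = integral ?S2 (grad_dot ?L g2)"
      by (rule integral_cong) (simp add: gd2)
    also have "\<dots> = g2 0 * J2"
      unfolding J2_def by (rule flux_form[OF hL _ g2t g20 r' g2]) (use e' in simp)
    finally have 2: "integral ?S2 (grad_dot h2 g2) = g2 0 * J2" .
    show ?thesis unfolding 1 2 \<beta>_def eq0 using JD by (simp add: field_simps)
  qed
  have bD: "(hD \<longlongrightarrow> a) (at y within ?SD)" if "norm y = \<epsilon>" for y
  proof -
    have yy: "y \<bullet> y = \<epsilon>\<^sup>2" using that by (simp add: dot_square_norm)
    have "(hD \<longlongrightarrow> (a + \<beta> * c0) + (- \<beta>) * (y \<bullet> y) powr q) (at y within ?SD)"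
      unfolding hD_def using yy e by (intro tendsto_intros) auto
    then show ?thesis using yy unfolding c0_def by simp
  qed
  have ln2: "ln (\<epsilon>'\<^sup>2) / 2 = ln \<epsilon>'" by (simp add: ln_realpow)
  have b2: "(h2 \<longlongrightarrow> a) (at y within ?S2)" if "norm y = \<epsilon>'" for y
  proof -
    have yy: "y \<bullet> y = \<epsilon>'\<^sup>2" using that by (simp add: dot_square_norm)
    have "(h2 \<longlongrightarrow> (a - ln \<epsilon>') + ln (y \<bullet> y) / 2) (at y within ?S2)"
      unfolding h2_def using yy e' by (intro tendsto_intros) auto
    then show ?thesis using yy ln2 by simp
  qed
  have bmvd: "bmvd_harmonic \<epsilon> \<epsilon>' p hD h2 a"
    unfolding bmvd_harmonic_def using hDh h2h bD b2 flux by blast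
  have a0: "a > 0" using a1 c0 by (smt (verit) abs_ge_zero mult_nonneg_nonneg)
  have hDb: "1 \<le> hD x \<and> hD x \<le> a + \<bar>\<beta>\<bar> * c0" if "\<epsilon> < norm x" for x
  proof -
    have s: "\<epsilon>\<^sup>2 < x \<bullet> x" using that norm_gt_iff[of \<epsilon> x] e by simp
    have e2: "0 < \<epsilon>\<^sup>2" using e by simp
    have xx: "0 < x \<bullet> x" using s e2 by linarith
    have P0: "0 < (x \<bullet> x) powr q" using xx by simp
    have P1: "(x \<bullet> x) powr q \<le> c0" unfolding c0_def
      by (rule powr_mono2') (use qneg s e2 in linarith)+
    have "\<bar>\<beta> * (c0 - (x \<bullet> x) powr q)\<bar> \<le> \<bar>\<beta>\<bar> * c0"
      unfolding abs_mult using P0 P1 by (intro mult_left_mono) auto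
    moreover have "hD x = a + \<beta> * (c0 - (x \<bullet> x) powr q)" unfolding hD_def by (simp add: algebra_simps)
    ultimately show ?thesis using a1 by (smt (verit) abs_ge_zero)
  qed
  have h2pos: "h2 x > 0" if "\<epsilon>' < norm x" for x
  proof -
    have s: "\<epsilon>'\<^sup>2 < x \<bullet> x" using that norm_gt_iff[of \<epsilon>' x] e' by simp
    have e2: "0 < \<epsilon>'\<^sup>2" using e' by simp
    have "ln (\<epsilon>'\<^sup>2) < ln (x \<bullet> x)" by (rule ln_less_cancel_iff[THEN iffD2]) (use s e2 in linarith)+
    then have "ln \<epsilon>' < ln (x \<bullet> x) / 2" using ln2 by simp
    then show ?thesis unfolding h2_def using a0 by simp
  qed
  have h2log: "1 * (1 + ln (norm x - \<epsilon>')) \<le> h2 x \<and> h2 x \<le> (a + \<bar>ln \<epsilon>'\<bar> + ln 2) * (1 + ln (norm x - \<epsilon>'))"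
    if x: "\<epsilon>' < norm x \<and> 1 + \<epsilon>' \<le> norm x - \<epsilon>'" for x :: "real^2"
  proof -
    define u where "u = norm x - \<epsilon>'"
    have u: "1 + \<epsilon>' \<le> u" "0 < u" "1 \<le> u" using x e' unfolding u_def by auto
    have nx: "norm x = u + \<epsilon>'" unfolding u_def by simp
    have nx0: "0 < norm x" using conjunct1[OF x] e' by linarith
    have lnx: "ln (x \<bullet> x) / 2 = ln (norm x)" by (simp add: dot_square_norm ln_realpow)
    have h2x: "h2 x = a - ln \<epsilon>' + ln (norm x)" unfolding h2_def lnx by simp
    have lu: "0 \<le> ln u" using u by simp
    have low: "ln u \<le> ln (norm x)" using u nx e' by simp
    have "ln (norm x) \<le> ln (2 * u)" using u nx e' by simp
    also have "ln (2 * u) = ln 2 + ln u" using u by (simp add: ln_mult_pos)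
    finally have up: "ln (norm x) \<le> ln 2 + ln u" .
    have l2: "0 \<le> ln (2::real)" by simp
    have C1: "1 \<le> a + \<bar>ln \<epsilon>'\<bar> + ln 2" using a1 l2 abs_ge_zero[of "ln \<epsilon>'"] by linarith
    have "(a + \<bar>ln \<epsilon>'\<bar> + ln 2) * ln u \<ge> 1 * ln u" using C1 lu by (intro mult_right_mono) auto
    then show ?thesis using h2x low up a1 unfolding u_def[symmetric]
      by (simp add: algebra_simps) (smt (verit) abs_ge_self abs_minus_cancel)
  qed
  show ?thesis
  proof (intro exI conjI)
    show "bmvd_harmonic \<epsilon> \<epsilon>' p hD h2 a" by (rule bmvd)
    show "a > 0" by (rule a0)
    show "\<forall>x. \<epsilon> < norm x \<longrightarrow> hD x > 0" using hDb by fastforce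
    show "\<forall>x. \<epsilon>' < norm x \<longrightarrow> h2 x > 0" using h2pos by blast
    show "\<forall>x. \<epsilon> < norm x \<longrightarrow> 1 \<le> hD x \<and> hD x \<le> a + \<bar>\<beta>\<bar> * c0" using hDb by blast
    show "(0::real) < 1" by simp
    show "0 < a + \<bar>\<beta>\<bar> * c0" using a0 c0 by (smt (verit) abs_ge_zero mult_nonneg_nonneg)
    show "0 < 1 + \<epsilon>'" using e' by simp
    show "(0::real) < 1" by simp
    show "0 < a + \<bar>ln \<epsilon>'\<bar> + ln 2" using a0 by (smt (verit) abs_ge_zero ln_ge_zero one_le_numeral)
    show "\<forall>x. \<epsilon>' < norm x \<and> 1 + \<epsilon>' \<le> norm x - \<epsilon>' \<longrightarrow>
           1 * (1 + ln (norm x - \<epsilon>')) \<le> h2 x \<and> h2 x \<le> (a + \<bar>ln \<epsilon>'\<bar> + ln 2) * (1 + ln (norm x - \<epsilon>'))"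
      using h2log by blast
  qed
qed



end
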